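(* Fix $V$ and $k\ge1$. For densities $\rho\in\{n/V: n=0,1,2,\dots\}$, the canonical expectation $\rho\mapsto\langle\exp(-\lambda N_k)\rangle^{C}_V(\rho)$ is a monotonically decreasing function of $\rho$ for every $\lambda>0$, and for every integer $r\ge1$ the moment $\rho\mapsto\langle N_k^r\rangle^{C}_V(\rho)$ is a monotonically increasing function of $\rho$.
   Context: Fix exponents $\alpha_1\ge\alpha_2\ge\alpha_3>0$ with $\alpha_1+\alpha_2+\alpha_3=1$ and let $\Lambda_V=\{x\in\mathbb{R}^3:0\le x_j\le V^{\alpha_j}\}$. The one-particle Hamiltonian $t_V$ is $-\Delta/2$ on $L^2(\Lambda_V)$ with Dirichlet boundary conditions, with eigenvalues $E_1(V)<E_2(V)\le\dots$ (these are $\frac{\pi^2}{2}\sum_j n_j^2V^{-2\alpha_j}$, $n_j\ge1$). For the perfect Bose gas at inverse temperature $\beta>0$, $T_V^{(n)}$ is the $n$-particle free Hamiltonian (generated by $t_V$) on the symmetric $n$-particle space, $Z_V(n)=\mathrm{Tr}\,e^{-\beta T_V^{(n)}}$ ($Z_V(0)=1$), and the canonical state at density $\rho=n/V$ is $\langle\cdot\rangle^C_V(\rho)=Z_V(n)^{-1}\mathrm{Tr}(\cdot\,e^{-\beta T_V^{(n)}})$. $N_k$ is the occupation number of the $k$-th one-particle eigenstate (a commuting family, treated as random variables). *)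

theory Defs
  imports "HOL-Analysis.Analysis" "HOL-Library.Multiset"
begin

type_synonym state = "nat \<times> nat \<times> nat"

text \<open>Dirichlet eigenvalue of -Delta/2 on the box with sides V powr a1, V powr a2, V powr a3,
  for the eigenfunction labelled by (n1,n2,n3), n_j \<ge> 1.\<close>
definition eig :: "real \<Rightarrow> real \<Rightarrow> real \<Rightarrow> real \<Rightarrow> state \<Rightarrow> real" where
  "eig V a1 a2 a3 q = (case q of (n1, n2, n3) \<Rightarrow>
     pi\<^sup>2 / 2 * (real n1 ^ 2 * V powr (-2 * a1) + real n2 ^ 2 * V powr (-2 * a2)
                 + real n3 ^ 2 * V powr (-2 * a3)))"

definition states :: "state set" where
  "states = {(n1, n2, n3). 1 \<le> n1 \<and> 1 \<le> n2 \<and> 1 \<le> n3}"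

definition eig_enum :: "real \<Rightarrow> real \<Rightarrow> real \<Rightarrow> real \<Rightarrow> (nat \<Rightarrow> state) \<Rightarrow> bool" where
  "eig_enum V a1 a2 a3 e \<longleftrightarrow> bij_betw e {1..} states \<and>
     (\<forall>i j. 1 \<le> i \<longrightarrow> i \<le> j \<longrightarrow> eig V a1 a2 a3 (e i) \<le> eig V a1 a2 a3 (e j))"

text \<open>Orthonormal basis of the symmetric n-particle space: occupation configurations,
  i.e. multisets of n one-particle states; N_q = count M q.\<close>
definition configs :: "nat \<Rightarrow> state multiset set" where
  "configs n = {M. size M = n \<and> set_mset M \<subseteq> states}"

definition boltz :: "real \<Rightarrow> real \<Rightarrow> real \<Rightarrow> real \<Rightarrow> real \<Rightarrow> state multiset \<Rightarrow> real" where
  "boltz beta V a1 a2 a3 M = exp (- beta * sum_mset (image_mset (eig V a1 a2 a3) M))"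

definition Zcan :: "real \<Rightarrow> real \<Rightarrow> real \<Rightarrow> real \<Rightarrow> real \<Rightarrow> nat \<Rightarrow> real" where
  "Zcan beta V a1 a2 a3 n = (\<Sum>\<^sub>\<infinity>M\<in>configs n. boltz beta V a1 a2 a3 M)"

definition cexp :: "real \<Rightarrow> real \<Rightarrow> real \<Rightarrow> real \<Rightarrow> real \<Rightarrow> (nat \<Rightarrow> real) \<Rightarrow> state \<Rightarrow> nat \<Rightarrow> real" where
  "cexp beta V a1 a2 a3 f q n =
     (\<Sum>\<^sub>\<infinity>M\<in>configs n. f (count M q) * boltz beta V a1 a2 a3 M) / Zcan beta V a1 a2 a3 n"

end

theory Submission
  imports Defs
begin


definition cutp :: "nat \<Rightarrow> 'a::linorder list \<Rightarrow> 'a list \<Rightarrow> nat" where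
  "cutp n x y = (LEAST i. i = n \<or> y!i \<le> x!i)"

definition swp :: "nat \<Rightarrow> 'a::linorder list \<Rightarrow> 'a list \<Rightarrow> 'a list \<times> 'a list" where
  "swp n x y = (let i = cutp n x y in (take i x @ drop (Suc i) y, take (Suc i) y @ drop i x))"

lemma cutp_eq:
  assumes "i \<le> n" "\<And>j. j < i \<Longrightarrow> \<not> y!j \<le> x!j" "i = n \<or> y!i \<le> x!i"
  shows "cutp n x y = i"
  unfolding cutp_def
proof (rule Least_equality)
  show "i = n \<or> y!i \<le> x!i" by fact
  fix j assume "j = n \<or> y!j \<le> x!j"
  then show "i \<le> j" using assms by (metis not_le)
qed

lemma cutp_props:
  shows "cutp n x y \<le> n" "\<And>j. j < cutp n x y \<Longrightarrow> \<not> y!j \<le> x!j"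
    "cutp n x y = n \<or> y!(cutp n x y) \<le> x!(cutp n x y)"
proof -
  have ex: "n = n \<or> y!n \<le> x!n" by simp
  show "cutp n x y \<le> n" unfolding cutp_def by (rule Least_le) simp
  show "\<And>j. j < cutp n x y \<Longrightarrow> \<not> y!j \<le> x!j" unfolding cutp_def
    using not_less_Least by blast
  show "cutp n x y = n \<or> y!(cutp n x y) \<le> x!(cutp n x y)" unfolding cutp_def
    by (rule LeastI[of _ n]) simp
qed

lemma swp_main:
  fixes a b :: "'a::linorder list"
  assumes sa: "sorted a" and sb: "sorted b" and la: "length a = n" and lb: "length b = Suc (Suc n)"
    and cd: "swp n a b = (c, d)"
  shows "sorted c" "sorted d" "length c = Suc n" "length d = Suc n"
    "mset c + mset d = mset a + mset b" "swp n c d = (a, b)"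
proof -
  define i where "i = cutp n a b"
  have iprops: "i \<le> n" "\<And>j. j < i \<Longrightarrow> \<not> b!j \<le> a!j" "i = n \<or> b!i \<le> a!i"
    using cutp_props[where n=n and x=a and y=b] unfolding i_def by auto
  have c: "c = take i a @ drop (Suc i) b" and d: "d = take (Suc i) b @ drop i a"
    using cd unfolding swp_def i_def[symmetric] by (auto simp: Let_def)
  show lc: "length c = Suc n" using c la lb iprops(1) by simp
  show ld: "length d = Suc n" using d la lb iprops(1) by simp
  show "mset c + mset d = mset a + mset b"
  proof -
    have "mset c + mset d = (mset (take i a) + mset (drop i a)) + (mset (take (Suc i) b) + mset (drop (Suc i) b))"
      using c d by (simp add: algebra_simps)
    also have "\<dots> = mset a + mset b"
      by (metis append_take_drop_id mset_append)
    finally show ?thesis .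
  qed
  show "sorted c"
    unfolding c sorted_append
  proof (intro conjI ballI)
    show "sorted (take i a)" using sa by simp
    show "sorted (drop (Suc i) b)" using sb by simp
    fix u v assume u: "u \<in> set (take i a)" and v: "v \<in> set (drop (Suc i) b)"
    from u obtain p where p: "p < i" "u = a!p" using la iprops(1)
      by (auto simp: in_set_conv_nth)
    from v obtain s where s: "Suc i + s < length b" "v = b!(Suc i + s)"
      by (auto simp: in_set_conv_nth) (metis add_Suc less_diff_conv add.commute)
    have i1: "i - 1 < i" using p by simp
    have "u \<le> a!(i-1)" using p sa la iprops(1) by (auto intro: sorted_nth_mono)
    also have "a!(i-1) < b!(i-1)" using iprops(2)[OF i1] by simp
    also have "b!(i-1) \<le> v" using s sb by (auto intro: sorted_nth_mono)
    finally show "u \<le> v" by simp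
  qed
  show "sorted d"
    unfolding d sorted_append
  proof (intro conjI ballI)
    show "sorted (take (Suc i) b)" using sb by simp
    show "sorted (drop i a)" using sa by simp
    fix u v assume u: "u \<in> set (take (Suc i) b)" and v: "v \<in> set (drop i a)"
    from u obtain p where p: "p \<le> i" "u = b!p" using lb iprops(1)
      by (auto simp: in_set_conv_nth less_Suc_eq_le)
    from v obtain s where s: "i + s < length a" "v = a!(i + s)"
      by (auto simp: in_set_conv_nth) (metis less_diff_conv add.commute)
    have "i < n" using s la by simp
    then have bi: "b!i \<le> a!i" using iprops(3) by simp
    have "u \<le> b!i" using p sb lb iprops(1) by (auto intro: sorted_nth_mono)
    also note bi
    also have "a!i \<le> v" using s sa by (auto intro: sorted_nth_mono)
    finally show "u \<le> v" .
  qed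
  have ci: "cutp n c d = i"
  proof (rule cutp_eq)
    show "i \<le> n" by fact
    fix j assume j: "j < i"
    have "d!j = b!j" using d j lb iprops(1) by (simp add: nth_append)
    moreover have "c!j = a!j" using c j la iprops(1) by (simp add: nth_append)
    ultimately show "\<not> d!j \<le> c!j" using iprops(2)[OF j] by simp
  next
    show "i = n \<or> d!i \<le> c!i"
    proof (cases "i = n")
      case False
      then have "i < n" using iprops(1) by simp
      have "d!i = b!i" using d lb iprops(1) by (simp add: nth_append)
      moreover have "c!i = b!(Suc i)" using c la lb \<open>i < n\<close> by (simp add: nth_append)
      moreover have "b!i \<le> b!(Suc i)" using sb lb \<open>i < n\<close> by (auto intro: sorted_nth_mono)
      ultimately show ?thesis by simp
    qed simp
  qed
  show "swp n c d = (a, b)"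
    unfolding swp_def ci using c d la lb iprops(1)
    by (simp add: Let_def min_def)
qed

lemma exG:
  fixes n :: nat
  shows "\<exists>G. inj_on G ({M::'a::linorder multiset. size M = n} \<times> {M. size M = Suc (Suc n)}) \<and>
    (\<forall>p \<in> {M::'a multiset. size M = n} \<times> {M. size M = Suc (Suc n)}.
       size (fst (G p)) = Suc n \<and> size (snd (G p)) = Suc n \<and> fst (G p) + snd (G p) = fst p + snd p)"
proof -
  define G where "G = (\<lambda>(A::'a multiset, B::'a multiset).
     (case swp n (sorted_list_of_multiset A) (sorted_list_of_multiset B) of (c, d) \<Rightarrow> (mset c, mset d)))"
  have key: "\<exists>c d. swp n (sorted_list_of_multiset A) (sorted_list_of_multiset B) = (c, d) \<and>
      G (A, B) = (mset c, mset d) \<and> sorted c \<and> sorted d \<and> length c = Suc n \<and> length d = Suc n \<and>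
      mset c + mset d = A + B \<and> swp n c d = (sorted_list_of_multiset A, sorted_list_of_multiset B)"
    if "size A = n" "size B = Suc (Suc n)" for A B
  proof -
    obtain c d where cd: "swp n (sorted_list_of_multiset A) (sorted_list_of_multiset B) = (c, d)"
      by (cases "swp n (sorted_list_of_multiset A) (sorted_list_of_multiset B)") auto
    have l1: "length (sorted_list_of_multiset A) = n" using that
      by (metis size_mset mset_sorted_list_of_multiset)
    have l2: "length (sorted_list_of_multiset B) = Suc (Suc n)" using that
      by (metis size_mset mset_sorted_list_of_multiset)
    note m = swp_main[OF sorted_sorted_list_of_multiset sorted_sorted_list_of_multiset l1 l2 cd]
    show ?thesis using cd m by (auto simp: G_def)
  qed
  show ?thesis
  proof (intro exI conjI ballI)
    show "inj_on G ({M. size M = n} \<times> {M. size M = Suc (Suc n)})"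
    proof (rule inj_onI)
      fix p p' assume p: "p \<in> {M::'a multiset. size M = n} \<times> {M::'a multiset. size M = Suc (Suc n)}"
        and p': "p' \<in> {M::'a multiset. size M = n} \<times> {M::'a multiset. size M = Suc (Suc n)}" and eq: "G p = G p'"
      obtain A B where AB: "p = (A, B)" by (cases p)
      obtain A' B' where AB': "p' = (A', B')" by (cases p')
      obtain c d where k: "G (A, B) = (mset c, mset d)" "sorted c" "sorted d"
          "swp n c d = (sorted_list_of_multiset A, sorted_list_of_multiset B)"
        using key[of A B] p AB by auto
      obtain c' d' where k': "G (A', B') = (mset c', mset d')" "sorted c'" "sorted d'"
          "swp n c' d' = (sorted_list_of_multiset A', sorted_list_of_multiset B')"
        using key[of A' B'] p' AB' by auto
      have "mset c = mset c'" "mset d = mset d'" using eq k(1) k'(1) AB AB' by auto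
      then have "c = c'" "d = d'"
        using k(2,3) k'(2,3) by (metis sorted_list_of_multiset_mset sorted_sort_id)+
      then have "sorted_list_of_multiset A = sorted_list_of_multiset A'"
         "sorted_list_of_multiset B = sorted_list_of_multiset B'" using k(4) k'(4) by auto
      then have "A = A'" "B = B'" by (metis mset_sorted_list_of_multiset)+
      then show "p = p'" using AB AB' by simp
    qed
  next
    fix p assume p: "p \<in> {M::'a multiset. size M = n} \<times> {M::'a multiset. size M = Suc (Suc n)}"
    obtain A B where AB: "p = (A, B)" by (cases p)
    obtain c d where k: "G (A, B) = (mset c, mset d)" "length c = Suc n" "length d = Suc n"
        "mset c + mset d = A + B"
      using key[of A B] p AB by auto
    show "size (fst (G p)) = Suc n" "size (snd (G p)) = Suc n" "fst (G p) + snd (G p) = fst p + snd p"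
      using k AB by auto
  qed
qed


lemma image_mset_inv_enc:
  assumes "inj enc" "set_mset C \<subseteq> range enc"
  shows "image_mset enc (image_mset (inv enc) C) = C"
proof -
  have "image_mset enc (image_mset (inv enc) C) = image_mset (\<lambda>x. enc (inv enc x)) C"
    by (simp add: multiset.map_comp o_def)
  also have "\<dots> = image_mset id C"
    by (rule image_mset_cong) (use assms in \<open>auto simp: f_inv_into_f\<close>)
  finally show ?thesis by simp
qed

lemma image_mset_inv_enc2:
  assumes "inj enc"
  shows "image_mset (inv enc) (image_mset enc A) = A"
  using assms by (simp add: multiset.map_comp o_def)

lemma exG_enc:
  fixes enc :: "'b \<Rightarrow> nat" and S :: "'b set" and n :: nat
  assumes enc: "inj enc"
  defines "D0 \<equiv> {M::'b multiset. size M = n \<and> set_mset M \<subseteq> S} \<times> {M::'b multiset. size M = Suc (Suc n) \<and> set_mset M \<subseteq> S}"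
  shows "\<exists>G. inj_on G D0 \<and>
    (\<forall>p \<in> D0. fst (G p) \<in> {M. size M = Suc n \<and> set_mset M \<subseteq> S} \<and>
        snd (G p) \<in> {M. size M = Suc n \<and> set_mset M \<subseteq> S} \<and> fst (G p) + snd (G p) = fst p + snd p)"
proof -
  obtain G0 where G0inj: "inj_on G0 ({M::nat multiset. size M = n} \<times> {M::nat multiset. size M = Suc (Suc n)})"
    and G0p: "\<And>p. p \<in> {M::nat multiset. size M = n} \<times> {M::nat multiset. size M = Suc (Suc n)} \<Longrightarrow>
       size (fst (G0 p)) = Suc n \<and> size (snd (G0 p)) = Suc n \<and> fst (G0 p) + snd (G0 p) = fst p + snd p"
    using exG[where n=n and 'a=nat] by blast
  define E where "E = (\<lambda>(A::'b multiset, B::'b multiset). (image_mset enc A, image_mset enc B))"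
  define G where "G = (\<lambda>p. (image_mset (inv enc) (fst (G0 (E p))), image_mset (inv enc) (snd (G0 (E p)))))"
  have ED: "E p \<in> {M::nat multiset. size M = n} \<times> {M::nat multiset. size M = Suc (Suc n)}" if "p \<in> D0" for p
    using that unfolding D0_def E_def by auto
  have sumE: "fst (G0 (E p)) + snd (G0 (E p)) = image_mset enc (fst p + snd p)" if "p \<in> D0" for p
    using G0p[OF ED[OF that]] unfolding E_def by (cases p) auto
  have rng: "set_mset (fst (G0 (E p))) \<subseteq> range enc" "set_mset (snd (G0 (E p))) \<subseteq> range enc"
    if "p \<in> D0" for p
  proof -
    have "set_mset (fst (G0 (E p)) + snd (G0 (E p))) \<subseteq> range enc"
      using sumE[OF that] by auto
    then show "set_mset (fst (G0 (E p))) \<subseteq> range enc" "set_mset (snd (G0 (E p))) \<subseteq> range enc"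
      by auto
  qed
  have sumG: "fst (G p) + snd (G p) = fst p + snd p" if "p \<in> D0" for p
  proof -
    have "fst (G p) + snd (G p) = image_mset (inv enc) (fst (G0 (E p)) + snd (G0 (E p)))"
      unfolding G_def by simp
    also have "\<dots> = fst p + snd p" using sumE[OF that] image_mset_inv_enc2[OF enc] by simp
    finally show ?thesis .
  qed
  show ?thesis
  proof (intro exI conjI ballI)
    show "inj_on G D0"
    proof (rule inj_onI)
      fix p p' assume p: "p \<in> D0" and p': "p' \<in> D0" and eq: "G p = G p'"
      have "image_mset enc (fst (G p)) = image_mset enc (fst (G p'))"
           "image_mset enc (snd (G p)) = image_mset enc (snd (G p'))" using eq by auto
      then have "fst (G0 (E p)) = fst (G0 (E p'))" "snd (G0 (E p)) = snd (G0 (E p'))"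
        unfolding G_def using image_mset_inv_enc[OF enc] rng[OF p] rng[OF p'] by auto
      then have "G0 (E p) = G0 (E p')" by (simp add: prod_eq_iff)
      then have "E p = E p'" using G0inj ED[OF p] ED[OF p'] by (auto dest: inj_onD)
      then have "image_mset (inv enc) (fst (E p)) = image_mset (inv enc) (fst (E p'))"
         "image_mset (inv enc) (snd (E p)) = image_mset (inv enc) (snd (E p'))" by auto
      then show "p = p'" unfolding E_def using image_mset_inv_enc2[OF enc]
        by (cases p; cases p') auto
    qed
  next
    fix p assume p: "p \<in> D0"
    have sz: "size (fst (G p)) = Suc n" "size (snd (G p)) = Suc n"
      using G0p[OF ED[OF p]] unfolding G_def by auto
    have "set_mset (fst p + snd p) \<subseteq> S" using p unfolding D0_def by auto
    then have "set_mset (fst (G p) + snd (G p)) \<subseteq> S" using sumG[OF p] by simp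
    then show "fst (G p) \<in> {M. size M = Suc n \<and> set_mset M \<subseteq> S}"
       "snd (G p) \<in> {M. size M = Suc n \<and> set_mset M \<subseteq> S}" using sz by auto
    show "fst (G p) + snd (G p) = fst p + snd p" by (rule sumG[OF p])
  qed
qed




lemma summable_prod_nonneg:
  fixes f g :: "_ \<Rightarrow> real"
  assumes f: "f summable_on A" and g: "g summable_on B"
    and fn: "\<And>x. x \<in> A \<Longrightarrow> f x \<ge> 0" and gn: "\<And>y. y \<in> B \<Longrightarrow> g y \<ge> 0"
  shows "(\<lambda>(x,y). f x * g y) summable_on A \<times> B"
    "infsum (\<lambda>(x,y). f x * g y) (A \<times> B) = infsum f A * infsum g B"
proof -
  have h: "((\<lambda>y. (\<lambda>(x,y). f x * g y) (x, y)) has_sum (f x * infsum g B)) B" if "x \<in> A" for x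
    using has_sum_cmult_right[OF has_sum_infsum[OF g], of "f x"] by simp
  have s: "(\<lambda>x. f x * infsum g B) summable_on A"
    by (rule summable_on_cmult_left[OF f])
  show S: "(\<lambda>(x,y). f x * g y) summable_on A \<times> B"
    by (rule summable_on_SigmaI[OF h s]) (auto intro!: mult_nonneg_nonneg fn gn)
  have "infsum (\<lambda>(x,y). f x * g y) (A \<times> B) = infsum (\<lambda>x. infsum (\<lambda>y. f x * g y) B) A"
    using infsum_Sigma'_banach[of "\<lambda>x y. f x * g y" A "\<lambda>_. B"] S by simp
  also have "\<dots> = infsum (\<lambda>x. f x * infsum g B) A"
    by (rule infsum_cong) (simp add: infsum_cmult_right[OF g])
  also have "\<dots> = infsum f A * infsum g B"
    by (rule infsum_cmult_left) (use f in simp)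
  finally show "infsum (\<lambda>(x,y). f x * g y) (A \<times> B) = infsum f A * infsum g B" .
qed

lemma infsum_finsum:
  fixes f :: "'i \<Rightarrow> 'a \<Rightarrow> real"
  assumes "finite I" "\<And>i. i \<in> I \<Longrightarrow> f i summable_on A"
  shows "(\<lambda>x. \<Sum>i\<in>I. f i x) summable_on A \<and> infsum (\<lambda>x. \<Sum>i\<in>I. f i x) A = (\<Sum>i\<in>I. infsum (f i) A)"
  using assms
proof (induction I rule: finite_induct)
  case empty
  then show ?case by simp
next
  case (insert i I)
  then have IH: "(\<lambda>x. \<Sum>i\<in>I. f i x) summable_on A"
      "infsum (\<lambda>x. \<Sum>i\<in>I. f i x) A = (\<Sum>i\<in>I. infsum (f i) A)" by auto
  have fi: "f i summable_on A" using insert by auto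
  show ?case
    using insert IH fi summable_on_add[OF fi IH(1)] infsum_add[OF fi IH(1)] by simp
qed

lemma geom_sq_summable:
  fixes t :: real assumes "t > 0"
  shows "(\<lambda>n::nat. exp (- t * real n ^ 2)) summable_on UNIV"
proof (rule summable_on_comparison_test)
  show "(\<lambda>n::nat. exp (- t) ^ n) summable_on UNIV"
    by (rule summable_nonneg_imp_summable_on) (use assms in \<open>auto intro!: summable_geometric\<close>)
  fix n :: nat
  have "real n \<le> real n ^ 2" by (cases n) (auto simp: power2_eq_square)
  then have "- t * real n ^ 2 \<le> - t * real n" using assms by (simp add: mult_left_mono)
  then show "exp (- t * real n ^ 2) \<le> exp (- t) ^ n"
    by (simp add: exp_of_nat_mult[symmetric] mult.commute)
qed simp


locale bg =
  fixes beta V a1 a2 a3 :: real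
  assumes beta_pos: "beta > 0" and V_pos: "V > 0"
begin

abbreviation "W \<equiv> boltz beta V a1 a2 a3"
abbreviation "Z \<equiv> Zcan beta V a1 a2 a3"
abbreviation "w q \<equiv> exp (- beta * eig V a1 a2 a3 q)"

lemma W_add: "W (A + B) = W A * W B"
  unfolding boltz_def by (subst exp_add[symmetric]) (simp add: algebra_simps)

lemma W_add_mset: "W (add_mset x M) = w x * W M"
  unfolding boltz_def by (subst exp_add[symmetric]) (simp add: algebra_simps)

lemma W_pos: "W M > 0"
  unfolding boltz_def by simp

lemma W_rep: "W (replicate_mset j q) = w q ^ j"
  by (induction j) (simp_all add: W_add_mset, simp add: boltz_def)

lemma w_summable: "w summable_on states"
proof -
  define t1 where "t1 = beta * (pi\<^sup>2 / 2) * V powr (-2 * a1)"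
  define t2 where "t2 = beta * (pi\<^sup>2 / 2) * V powr (-2 * a2)"
  define t3 where "t3 = beta * (pi\<^sup>2 / 2) * V powr (-2 * a3)"
  have tp: "t1 > 0" "t2 > 0" "t3 > 0" unfolding t1_def t2_def t3_def using beta_pos V_pos by auto
  define g where "g = (\<lambda>t (n::nat). exp (- t * real n ^ 2))"
  have gs: "g t summable_on UNIV" if "t > 0" for t
    unfolding g_def by (rule geom_sq_summable[OF that])
  have s23: "(\<lambda>(y,z). g t2 y * g t3 z) summable_on UNIV \<times> UNIV"
    by (rule summable_prod_nonneg(1)[OF gs gs]) (use tp in \<open>auto simp: g_def\<close>)
  have s123: "(\<lambda>(x,yz). g t1 x * (\<lambda>(y,z). g t2 y * g t3 z) yz) summable_on UNIV \<times> (UNIV \<times> UNIV)"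
    by (rule summable_prod_nonneg(1)[OF gs s23]) (use tp in \<open>auto simp: g_def\<close>)
  have eq: "w q = (\<lambda>(x,yz). g t1 x * (\<lambda>(y,z). g t2 y * g t3 z) yz) q" for q
  proof -
    obtain x y z where q: "q = (x, y, z)" by (cases q) auto
    show ?thesis unfolding q eig_def g_def t1_def t2_def t3_def
      by (simp add: exp_add[symmetric] algebra_simps)
  qed
  have "w = (\<lambda>(x,yz). g t1 x * (\<lambda>(y,z). g t2 y * g t3 z) yz)" by (rule ext) (rule eq)
  then have "w summable_on UNIV" using s123 by simp
  then show ?thesis by (rule summable_on_subset) simp
qed

lemma configs_0: "configs 0 = {{#}}"
  unfolding configs_def by auto

lemma Z_summable: "W summable_on configs n"
proof (induction n)
  case 0
  then show ?case by (simp add: configs_0)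
next
  case (Suc n)
  define ch where "ch = (\<lambda>M::state multiset. SOME x. x \<in># M)"
  define G where "G = (\<lambda>M. (ch M, M - {#ch M#}))"
  have chM: "ch M \<in># M" if "M \<in> configs (Suc n)" for M
  proof -
    have "M \<noteq> {#}" using that unfolding configs_def by auto
    then show ?thesis unfolding ch_def by (metis multiset_nonemptyE someI)
  qed
  have decomp: "M = add_mset (fst (G M)) (snd (G M))" if "M \<in> configs (Suc n)" for M
    using chM[OF that] unfolding G_def by simp
  have inj: "inj_on G (configs (Suc n))"
    by (rule inj_onI) (metis decomp)
  have img: "G ` configs (Suc n) \<subseteq> states \<times> configs n"
  proof
    fix p assume "p \<in> G ` configs (Suc n)"
    then obtain M where M: "M \<in> configs (Suc n)" "p = G M" by auto
    have "size M = Suc n" "set_mset M \<subseteq> states" using M unfolding configs_def by auto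
    then show "p \<in> states \<times> configs n"
      using chM[OF M(1)] M(2) unfolding G_def configs_def
      by (auto simp: size_Diff_singleton dest: in_diffD)
  qed
  have h: "(\<lambda>(x, A). w x * W A) summable_on states \<times> configs n"
    by (rule summable_prod_nonneg(1)[OF w_summable Suc.IH]) (auto intro: less_imp_le W_pos)
  have "(\<lambda>(x, A). w x * W A) summable_on G ` configs (Suc n)"
    by (rule summable_on_subset[OF h img])
  then have "((\<lambda>(x, A). w x * W A) \<circ> G) summable_on configs (Suc n)"
    using summable_on_reindex[OF inj] by blast
  moreover have "((\<lambda>(x, A). w x * W A) \<circ> G) M = W M" if "M \<in> configs (Suc n)" for M
    using decomp[OF that] by (metis (no_types, lifting) W_add_mset case_prod_beta comp_apply)
  ultimately show ?case using summable_on_cong by (metis (no_types, lifting))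
qed

lemma Z_pos: "Z n > 0"
proof -
  define M0 where "M0 = replicate_mset n (1::nat, 1::nat, 1::nat)"
  have M0: "M0 \<in> configs n" unfolding M0_def configs_def states_def by auto
  have "sum W {M0} \<le> infsum W (configs n)"
    by (rule finite_sum_le_infsum[OF Z_summable]) (use M0 in \<open>auto intro: less_imp_le W_pos\<close>)
  then show ?thesis using W_pos[of M0] unfolding Zcan_def by simp
qed

lemma T_eq:
  assumes q: "q \<in> states" and j: "j \<le> n"
  shows "infsum W {M \<in> configs n. j \<le> count M q} = w q ^ j * Z (n - j)"
proof -
  define f where "f = (\<lambda>A. A + replicate_mset j q)"
  have inj: "inj_on f (configs (n - j))" unfolding f_def by (rule inj_onI) simp
  have img: "f ` configs (n - j) = {M \<in> configs n. j \<le> count M q}"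
  proof (intro set_eqI iffI)
    fix M assume "M \<in> f ` configs (n - j)"
    then obtain A where A: "A \<in> configs (n - j)" "M = A + replicate_mset j q" unfolding f_def by auto
    then show "M \<in> {M \<in> configs n. j \<le> count M q}" using q j unfolding configs_def by auto
  next
    fix M assume M: "M \<in> {M \<in> configs n. j \<le> count M q}"
    have sub: "replicate_mset j q \<subseteq># M" using M by (simp add: subseteq_mset_def)
    have "M - replicate_mset j q \<in> configs (n - j)"
      using M sub unfolding configs_def by (auto simp: size_Diff_submset dest: in_diffD)
    moreover have "M = f (M - replicate_mset j q)" unfolding f_def using sub by simp
    ultimately show "M \<in> f ` configs (n - j)" by blast
  qed
  have "infsum W {M \<in> configs n. j \<le> count M q} = infsum (W \<circ> f) (configs (n - j))"
    using infsum_reindex[OF inj, of W] img by simp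
  also have "\<dots> = infsum (\<lambda>A. W A * w q ^ j) (configs (n - j))"
    by (rule infsum_cong) (simp add: f_def W_add W_rep)
  also have "\<dots> = w q ^ j * Z (n - j)"
    unfolding Zcan_def by (subst infsum_cmult_left) (auto simp: Z_summable)
  finally show ?thesis .
qed

lemma T_empty:
  assumes "n < j"
  shows "{M \<in> configs n. j \<le> count M q} = {}"
proof -
  have "j \<le> n" if "M \<in> configs n" "j \<le> count M q" for M
    using that count_le_size[of M q] unfolding configs_def by auto
  then show ?thesis using assms by force
qed

lemma logconcave: "Z n * Z (Suc (Suc n)) \<le> Z (Suc n) ^ 2"
proof -
  have cfg: "configs k = {M. size M = k \<and> set_mset M \<subseteq> states}" for k
    unfolding configs_def by simp
  define D0 where "D0 = configs n \<times> configs (Suc (Suc n))"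
  obtain G where Ginj: "inj_on G D0" and Gp: "\<And>p. p \<in> D0 \<Longrightarrow> fst (G p) \<in> configs (Suc n) \<and>
      snd (G p) \<in> configs (Suc n) \<and> fst (G p) + snd (G p) = fst p + snd p"
    using exG_enc[OF inj_to_nat, of n states] unfolding D0_def cfg by blast
  define h where "h = (\<lambda>(C, D). W C * W D)"
  have hbig: "h summable_on configs (Suc n) \<times> configs (Suc n)"
    unfolding h_def by (rule summable_prod_nonneg(1)[OF Z_summable Z_summable]) (auto intro: less_imp_le W_pos)
  have sub: "G ` D0 \<subseteq> configs (Suc n) \<times> configs (Suc n)"
  proof (rule image_subsetI)
    fix p assume "p \<in> D0"
    then show "G p \<in> configs (Suc n) \<times> configs (Suc n)" using Gp[of p] by (simp add: mem_Times_iff)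
  qed
  have "Z n * Z (Suc (Suc n)) = infsum h D0"
    unfolding D0_def h_def Zcan_def
    by (rule summable_prod_nonneg(2)[symmetric, OF Z_summable Z_summable]) (auto intro: less_imp_le W_pos)
  also have "\<dots> = infsum (h \<circ> G) D0"
  proof (rule infsum_cong)
    fix p assume p: "p \<in> D0"
    have "h p = W (fst p + snd p)" unfolding h_def by (cases p) (simp add: W_add)
    also have "\<dots> = W (fst (G p) + snd (G p))" using Gp[OF p] by simp
    also have "\<dots> = (h \<circ> G) p" unfolding h_def by (cases "G p") (simp add: W_add)
    finally show "h p = (h \<circ> G) p" .
  qed
  also have "\<dots> = infsum h (G ` D0)" by (rule infsum_reindex[OF Ginj, symmetric])
  also have "\<dots> \<le> infsum h (configs (Suc n) \<times> configs (Suc n))"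
    by (rule infsum_mono2[OF summable_on_subset[OF hbig sub] hbig sub])
       (auto simp: h_def intro!: mult_nonneg_nonneg less_imp_le[OF W_pos])
  also have "\<dots> = Z (Suc n) ^ 2"
    unfolding h_def Zcan_def power2_eq_square
    by (rule summable_prod_nonneg(2)[OF Z_summable Z_summable]) (auto intro: less_imp_le W_pos)
  finally show ?thesis .
qed

definition "rr k = Z k / Z (Suc k)"

lemma rr_mono: "a \<le> b \<Longrightarrow> rr a \<le> rr b"
proof -
  have "rr k \<le> rr (Suc k)" for k
  proof -
    have "Z k * Z (Suc (Suc k)) \<le> Z (Suc k) * Z (Suc k)"
      using logconcave[of k] by (simp add: power2_eq_square)
    then show ?thesis unfolding rr_def using Z_pos[of k] Z_pos[of "Suc k"] Z_pos[of "Suc (Suc k)"]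
      by (simp add: divide_simps)
  qed
  then have "incseq rr" by (rule incseq_SucI)
  then show "a \<le> b \<Longrightarrow> rr a \<le> rr b" by (simp add: incseq_def)
qed

lemma ratio_prod: "Z a / Z (a + j) = (\<Prod>i<j. rr (a + i))"
proof (induction j)
  case 0
  then show ?case using Z_pos[of a] by simp
next
  case (Suc j)
  have "Z a / Z (a + Suc j) = Z a / Z (a + j) * rr (a + j)"
    unfolding rr_def using Z_pos[of "a + j"] by simp
  then show ?case using Suc by simp
qed

lemma rr_nonneg: "rr k \<ge> 0"
  unfolding rr_def using Z_pos[of k] Z_pos[of "Suc k"] by simp

lemma ratio_mono: "a \<le> b \<Longrightarrow> Z a / Z (a + j) \<le> Z b / Z (b + j)"
  unfolding ratio_prod
  by (rule prod_mono) (simp add: rr_nonneg rr_mono)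

definition "pp q j n = infsum W {M \<in> configs n. j \<le> count M q} / Z n"

lemma pp_nonneg: "pp q j n \<ge> 0"
  unfolding pp_def using Z_pos[of n]
  by (intro divide_nonneg_pos infsum_nonneg) (auto intro: less_imp_le W_pos)

lemma pp_mono:
  assumes q: "q \<in> states" and nm: "n \<le> m"
  shows "pp q j n \<le> pp q j m"
proof (cases "j \<le> n")
  case False
  then have "n < j" by simp
  then have "pp q j n = 0" unfolding pp_def T_empty[OF \<open>n < j\<close>] by simp
  then show ?thesis using pp_nonneg by simp
next
  case True
  have e: "pp q j k = w q ^ j * (Z (k - j) / Z (k - j + j))" if "j \<le> k" for k
    unfolding pp_def T_eq[OF q that] using that by simp
  have r: "Z (n - j) / Z (n - j + j) \<le> Z (m - j) / Z (m - j + j)"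
    by (rule ratio_mono) (use nm in simp)
  show ?thesis unfolding e[OF True] e[OF order_trans[OF True nm]]
    by (rule mult_left_mono[OF r]) simp
qed

lemma telescope:
  fixes f :: "nat \<Rightarrow> real"
  shows "(\<Sum>j\<in>{1..m}. (f j - f (j - 1)) * (if j \<le> c then 1 else 0)) = f (min m c) - f 0"
proof (induction m)
  case 0
  then show ?case by simp
next
  case (Suc m)
  have "{1..Suc m} = insert (Suc m) {1..m}" by auto
  then show ?case using Suc by (auto simp: min_def)
qed

lemma cexp_repr:
  assumes nm: "n \<le> m"
  shows "cexp beta V a1 a2 a3 f q n = f 0 + (\<Sum>j\<in>{1..m}. (f j - f (j - 1)) * pp q j n)"
proof -
  define ind where "ind = (\<lambda>j M. if j \<le> count M q then W M else 0)"
  have pt: "f (count M q) * W M = f 0 * W M + (\<Sum>j\<in>{1..m}. (f j - f (j - 1)) * ind j M)"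
    if "M \<in> configs n" for M
  proof -
    have "count M q \<le> m" using that count_le_size[of M q] nm unfolding configs_def by auto
    then have "f (count M q) = f 0 + (\<Sum>j\<in>{1..m}. (f j - f (j - 1)) * (if j \<le> count M q then 1 else 0))"
      using telescope[where f=f and m=m and c="count M q", unfolded min_absorb2[OF \<open>count M q \<le> m\<close>]] by linarith
    then have "f (count M q) * W M = f 0 * W M + (\<Sum>j\<in>{1..m}. (f j - f (j - 1)) * (if j \<le> count M q then 1 else 0)) * W M"
      by (simp add: distrib_right)
    also have "(\<Sum>j\<in>{1..m}. (f j - f (j - 1)) * (if j \<le> count M q then 1 else 0)) * W M
        = (\<Sum>j\<in>{1..m}. (f j - f (j - 1)) * ind j M)"
      unfolding sum_distrib_right ind_def by (rule sum.cong) auto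
    finally show ?thesis .
  qed
  have indsum: "ind j summable_on configs n" for j
    by (rule summable_on_comparison_test[OF Z_summable]) (auto simp: ind_def intro: less_imp_le W_pos)
  have indinf: "infsum (ind j) (configs n) = infsum W {M \<in> configs n. j \<le> count M q}" for j
    by (rule infsum_cong_neutral) (auto simp: ind_def)
  have s1: "(\<lambda>M. f 0 * W M) summable_on configs n" by (rule summable_on_cmult_right[OF Z_summable])
  have fs: "(\<lambda>M. \<Sum>j\<in>{1..m}. (f j - f (j - 1)) * ind j M) summable_on configs n \<and>
      infsum (\<lambda>M. \<Sum>j\<in>{1..m}. (f j - f (j - 1)) * ind j M) (configs n)
      = (\<Sum>j\<in>{1..m}. infsum (\<lambda>M. (f j - f (j - 1)) * ind j M) (configs n))"
    by (rule infsum_finsum) (auto intro: summable_on_cmult_right[OF indsum])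
  have "infsum (\<lambda>M. f (count M q) * W M) (configs n)
      = infsum (\<lambda>M. f 0 * W M + (\<Sum>j\<in>{1..m}. (f j - f (j - 1)) * ind j M)) (configs n)"
    by (rule infsum_cong) (rule pt)
  also have "\<dots> = f 0 * Z n + (\<Sum>j\<in>{1..m}. (f j - f (j - 1)) * infsum W {M \<in> configs n. j \<le> count M q})"
    using infsum_add[OF s1 conjunct1[OF fs]] conjunct2[OF fs]
    by (simp add: infsum_cmult_right[OF indsum] infsum_cmult_right[OF Z_summable] indinf Zcan_def)
  finally show ?thesis
    unfolding cexp_def pp_def using Z_pos[of n]
    by (simp add: add_divide_distrib sum_divide_distrib)
qed

end


theorem theorem3p1:
  fixes V beta a1 a2 a3 :: real and e :: "nat \<Rightarrow> state" and k :: nat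
  assumes "a1 \<ge> a2" "a2 \<ge> a3" "a3 > 0" "a1 + a2 + a3 = 1"
    and "V > 0" and "beta > 0"
    and "eig_enum V a1 a2 a3 e" and "k \<ge> 1"
  shows "(\<forall>lam::real. lam > 0 \<longrightarrow> (\<forall>n m :: nat. real n / V \<le> real m / V \<longrightarrow>
            cexp beta V a1 a2 a3 (\<lambda>j. exp (- lam * real j)) (e k) m
              \<le> cexp beta V a1 a2 a3 (\<lambda>j. exp (- lam * real j)) (e k) n))
       \<and> (\<forall>r::nat. r \<ge> 1 \<longrightarrow> (\<forall>n m :: nat. real n / V \<le> real m / V \<longrightarrow>
            cexp beta V a1 a2 a3 (\<lambda>j. real j ^ r) (e k) n
              \<le> cexp beta V a1 a2 a3 (\<lambda>j. real j ^ r) (e k) m))"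
proof -
  interpret bg beta V a1 a2 a3 using assms by unfold_locales auto
  have q: "e k \<in> states" using assms(7) assms(8) unfolding eig_enum_def
    by (auto dest: bij_betw_apply)
  have nm: "n \<le> m" if "real n / V \<le> real m / V" for n m :: nat
    using that assms(5) by (simp add: divide_le_cancel)
  show ?thesis
  proof (intro conjI allI impI)
    fix lam :: real and n m :: nat
    assume lam: "lam > 0" and h: "real n / V \<le> real m / V"
    define f where "f = (\<lambda>j::nat. exp (- lam * real j))"
    have le: "n \<le> m" using nm[OF h] .
    have "cexp beta V a1 a2 a3 f (e k) m = f 0 + (\<Sum>j\<in>{1..m}. (f j - f (j - 1)) * pp (e k) j m)"
      by (rule cexp_repr) simp
    also have "\<dots> \<le> f 0 + (\<Sum>j\<in>{1..m}. (f j - f (j - 1)) * pp (e k) j n)"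
    proof (rule add_left_mono, rule sum_mono)
      fix j assume j: "j \<in> {1..m}"
      have "f j \<le> f (j - 1)" unfolding f_def using lam j by (auto simp: mult_left_mono)
      then show "(f j - f (j - 1)) * pp (e k) j m \<le> (f j - f (j - 1)) * pp (e k) j n"
        by (intro mult_left_mono_neg pp_mono[OF q le]) simp
    qed
    also have "\<dots> = cexp beta V a1 a2 a3 f (e k) n"
      by (rule cexp_repr[symmetric]) (rule le)
    finally show "cexp beta V a1 a2 a3 (\<lambda>j. exp (- lam * real j)) (e k) m
              \<le> cexp beta V a1 a2 a3 (\<lambda>j. exp (- lam * real j)) (e k) n"
      unfolding f_def .
  next
    fix r :: nat and n m :: nat
    assume r: "r \<ge> 1" and h: "real n / V \<le> real m / V"
    define f where "f = (\<lambda>j::nat. real j ^ r)"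
    have le: "n \<le> m" using nm[OF h] .
    have "cexp beta V a1 a2 a3 f (e k) n = f 0 + (\<Sum>j\<in>{1..m}. (f j - f (j - 1)) * pp (e k) j n)"
      by (rule cexp_repr) (rule le)
    also have "\<dots> \<le> f 0 + (\<Sum>j\<in>{1..m}. (f j - f (j - 1)) * pp (e k) j m)"
    proof (rule add_left_mono, rule sum_mono)
      fix j assume j: "j \<in> {1..m}"
      have "f (j - 1) \<le> f j" unfolding f_def by (rule power_mono) auto
      then show "(f j - f (j - 1)) * pp (e k) j n \<le> (f j - f (j - 1)) * pp (e k) j m"
        by (intro mult_left_mono pp_mono[OF q le]) simp
    qed
    also have "\<dots> = cexp beta V a1 a2 a3 f (e k) m"
      by (rule cexp_repr[symmetric]) simp
    finally show "cexp beta V a1 a2 a3 (\<lambda>j. real j ^ r) (e k) n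
              \<le> cexp beta V a1 a2 a3 (\<lambda>j. real j ^ r) (e k) m"
      unfolding f_def .
  qed
qed

end
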